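(* Let $\mathcal P$ be a polycyclic presentation on $g_1,\ldots,g_n$ with $r_1<\infty$, assume the subpresentation $\mathcal P^{[2]}$ is consistent, and assume there is an endomorphism $\sigma$ of $H^{[2]}$ with $\sigma(g_j)=g^{a_{1,j}}$ for $2\le j\le n$. (a) If $c(g_jg_1^{r_1})=c(g_j\,g^{e_1})$ holds for all $j>1$, then $\sigma^{r_1}$ equals the inner automorphism $x\mapsto (g^{e_1})^{-1}x\,g^{e_1}$ of $H^{[2]}$, and $\sigma$ is an automorphism. (b) If moreover $c(g_1^{r_1+1})=c(g_1\,g^{e_1})$ holds, then $\sigma$ fixes (the element represented by) $g^{e_1}$.
   Context: A polycyclic presentation $\mathcal P$ on generators $g_1,\ldots,g_n$ consists of $r_1,\ldots,r_n\in\mathbb N\cup\{\infty\}$ and integers $e_{i,k},a_{i,j,k},b_{i,j,k}$ ($1\le i<j\le n$, $1\le k\le n$) with $0\le e_{i,k},a_{i,j,k},b_{i,j,k}<r_k$ whenever $r_k<\infty$, and has defining relations $g_i^{r_i}=g^{e_i}$ (for $r_i<\infty$), $g_jg_i=g_ig^{a_{i,j}}$ (for $i<j$), $g_jg_i^{-1}=g_i^{-1}g^{b_{i,j}}$ (for $i<j$, $r_i=\infty$), where $g^{e_i}=g_{i+1}^{e_{i,i+1}}\cdots g_n^{e_{i,n}}$, $g^{a_{i,j}}=g_{i+1}^{a_{i,j,i+1}}\cdots g_n^{a_{i,j,n}}$, $g^{b_{i,j}}=g_{i+1}^{b_{i,j,i+1}}\cdots g_n^{b_{i,j,n}}$ (with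 $g_k^x$ for $x<0$ meaning $(g_k^{-1})^{|x|}$). From the presentation one computes integers $c_{i,j,k},d_{i,j,k},f_{i,k}$ (in $[0,r_k)$ when $r_k<\infty$) such that in the presented group $g_j^{-1}g_i=g_ig^{c_{i,j}}$ ($i<j$, $r_j=\infty$), $g_j^{-1}g_i^{-1}=g_i^{-1}g^{d_{i,j}}$ ($i<j$, $r_i=r_j=\infty$), $g_i^{-1}=g_i^{r_i-1}g^{f_i}$ ($r_i<\infty$). Let $M$ be the free monoid on $\{g_1^{\pm1},\ldots,g_n^{\pm1}\}$. A collection step replaces a subword equal to the left-hand side of one of these six kinds of relations by its right-hand side, or deletes $g_ig_i^{-1}$ or $g_i^{-1}g_i$; a word admitting no step is reduced (of the form $g_1^{x_1}\cdots g_n^{x_n}$ with $0\le x_i<r_i$ if $r_i<\infty$). The collection-to-the-left algorithm applies steps, always choosing the leftmost occurrence of a non-reduced subword involving a generator of smallest index (lower index has priority), until the word is reduced; $c\colon M\to M$ maps a word to the result. $\mathcal P^{[2]}$ is the presentation on $g_2,\ldots,g_n$ consisting of those relations above with $i\ge2$; $H^{[2]}$ is the group it defines. $\mathcal P^{[2]}$ is consistent if every element of $H^{[2]}$ is represented by exactly one reduced word in $g_2,\ldots,g_n$. *)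

theory Defs
  imports "HOL-Algebra.Group" "HOL-Library.Extended_Nat"
begin

text \<open>Words in the free monoid M on g_1^{+-1},...,g_n^{+-1}: a letter (i, True) is g_i,
  a letter (i, False) is g_i^{-1}.\<close>
type_synonym word = "(nat \<times> bool) list"

text \<open>A polycyclic presentation together with the derived data c, d, f.
  pr i = \<infinity> encodes r_i = \<infinity>.  pe i k = e_{i,k}, pa i j k = a_{i,j,k}, pb i j k = b_{i,j,k},
  pc i j k = c_{i,j,k}, pd i j k = d_{i,j,k}, pf i k = f_{i,k}.\<close>
record pcp =
  pn :: nat
  pr :: "nat \<Rightarrow> enat"
  pe :: "nat \<Rightarrow> nat \<Rightarrow> int"
  pa :: "nat \<Rightarrow> nat \<Rightarrow> nat \<Rightarrow> int"
  pb :: "nat \<Rightarrow> nat \<Rightarrow> nat \<Rightarrow> int"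
  pc :: "nat \<Rightarrow> nat \<Rightarrow> nat \<Rightarrow> int"
  pd :: "nat \<Rightarrow> nat \<Rightarrow> nat \<Rightarrow> int"
  pf :: "nat \<Rightarrow> nat \<Rightarrow> int"

definition exp_ok :: "enat \<Rightarrow> int \<Rightarrow> bool" where
  "exp_ok r x = (case r of \<infinity> \<Rightarrow> True | enat m \<Rightarrow> 0 \<le> x \<and> x < int m)"

text \<open>gvec P i x is the word g_{i+1}^{x_{i+1}} ... g_n^{x_n}
  (with g_k^x for x < 0 meaning (g_k^{-1})^{|x|}).\<close>
definition gvec :: "pcp \<Rightarrow> nat \<Rightarrow> (nat \<Rightarrow> int) \<Rightarrow> word" where
  "gvec P i x = concat (map (\<lambda>k. replicate (nat \<bar>x k\<bar>) (k, 0 \<le> x k)) [Suc i..<Suc (pn P)])"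

definition inv_word :: "word \<Rightarrow> word" where
  "inv_word w = rev (map (\<lambda>(i, s). (i, \<not> s)) w)"

definition nf_word :: "pcp \<Rightarrow> nat \<Rightarrow> word \<Rightarrow> bool" where
  "nf_word P i w =
     (\<exists>x. w = gvec P i x \<and> (\<forall>k\<in>{Suc i..pn P}. exp_ok (pr P k) (x k)))"

definition words_over :: "pcp \<Rightarrow> nat \<Rightarrow> word set" where
  "words_over P m = {w. \<forall>l\<in>set w. fst l \<in> {m..pn P}}"

definition pcp_wf :: "pcp \<Rightarrow> bool" where
  "pcp_wf P =
    ((\<forall>i\<in>{1..pn P}. pr P i \<noteq> 0) \<and>
     (\<forall>i\<in>{1..pn P}. \<forall>k\<in>{Suc i..pn P}. exp_ok (pr P k) (pe P i k)) \<and>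
     (\<forall>i j k. 1 \<le> i \<and> i < j \<and> j \<le> pn P \<and> i < k \<and> k \<le> pn P \<longrightarrow>
        exp_ok (pr P k) (pa P i j k) \<and> exp_ok (pr P k) (pb P i j k)))"

text \<open>Equality in the group H^[m] presented by the subpresentation P^[m]
  (relations with i \<ge> m, on the generators g_m,...,g_n): the congruence on words generated by
  free cancellation and the defining relations of P^[m].\<close>
inductive peq :: "pcp \<Rightarrow> nat \<Rightarrow> word \<Rightarrow> word \<Rightarrow> bool" for P m where
  refl: "peq P m w w"
| sym: "peq P m u v \<Longrightarrow> peq P m v u"
| trans: "peq P m u v \<Longrightarrow> peq P m v w \<Longrightarrow> peq P m u w"
| ctxt: "peq P m u v \<Longrightarrow> peq P m (x @ u @ y) (x @ v @ y)"
| cancel1: "i \<in> {m..pn P} \<Longrightarrow> peq P m [(i, True), (i, False)] []"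
| cancel2: "i \<in> {m..pn P} \<Longrightarrow> peq P m [(i, False), (i, True)] []"
| power: "i \<in> {m..pn P} \<Longrightarrow> pr P i = enat k \<Longrightarrow>
           peq P m (replicate k (i, True)) (gvec P i (pe P i))"
| conj: "m \<le> i \<Longrightarrow> i < j \<Longrightarrow> j \<le> pn P \<Longrightarrow>
           peq P m [(j, True), (i, True)] ((i, True) # gvec P i (pa P i j))"
| conj_inv: "m \<le> i \<Longrightarrow> i < j \<Longrightarrow> j \<le> pn P \<Longrightarrow> pr P i = \<infinity> \<Longrightarrow>
           peq P m [(j, True), (i, False)] ((i, False) # gvec P i (pb P i j))"

definition consistent2 :: "pcp \<Rightarrow> bool" where
  "consistent2 P = (\<forall>w\<in>words_over P 2. \<exists>!v. nf_word P 1 v \<and> peq P 2 w v)"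

definition cls :: "pcp \<Rightarrow> word \<Rightarrow> word set" where
  "cls P w = {v. peq P 2 w v}"

definition H2 :: "pcp \<Rightarrow> word set monoid" where
  "H2 P = \<lparr>carrier = (\<lambda>w. cls P w) ` words_over P 2,
           mult = (\<lambda>A B. {w. \<exists>u\<in>A. \<exists>v\<in>B. peq P 2 (u @ v) w}),
           one = cls P []\<rparr>"

text \<open>The data c, d, f are those computed from the presentation: g^{c_{i,j}}, g^{d_{i,j}}, g^{f_i}
  are the (reduced) expressions of (g^{a_{i,j}})^{-1}, (g^{b_{i,j}})^{-1}, (g^{e_i})^{-1}, which
  is equivalent to the relations g_j^{-1}g_i = g_i g^{c_{i,j}}, g_j^{-1}g_i^{-1} = g_i^{-1}g^{d_{i,j}},
  g_i^{-1} = g_i^{r_i-1}g^{f_i}; they are required to hold in H^[2].\<close>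
definition derived_ok :: "pcp \<Rightarrow> bool" where
  "derived_ok P =
    ((\<forall>i j. 1 \<le> i \<and> i < j \<and> j \<le> pn P \<and> pr P j = \<infinity> \<longrightarrow>
        (\<forall>k\<in>{Suc i..pn P}. exp_ok (pr P k) (pc P i j k)) \<and>
        peq P 2 (gvec P i (pc P i j)) (inv_word (gvec P i (pa P i j)))) \<and>
     (\<forall>i j. 1 \<le> i \<and> i < j \<and> j \<le> pn P \<and> pr P i = \<infinity> \<and> pr P j = \<infinity> \<longrightarrow>
        (\<forall>k\<in>{Suc i..pn P}. exp_ok (pr P k) (pd P i j k)) \<and>
        peq P 2 (gvec P i (pd P i j)) (inv_word (gvec P i (pb P i j)))) \<and>
     (\<forall>i\<in>{1..pn P}. pr P i \<noteq> \<infinity> \<longrightarrow>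
        (\<forall>k\<in>{Suc i..pn P}. exp_ok (pr P k) (pf P i k)) \<and>
        peq P 2 (gvec P i (pf P i)) (inv_word (gvec P i (pe P i)))))"

text \<open>Collection rules: rule_app P lhs rhs i means lhs \<rightarrow> rhs is a collection step whose
  smallest involved generator index is i.\<close>
inductive rule_app :: "pcp \<Rightarrow> word \<Rightarrow> word \<Rightarrow> nat \<Rightarrow> bool" for P where
  r_pow: "i \<in> {1..pn P} \<Longrightarrow> pr P i = enat m \<Longrightarrow>
     rule_app P (replicate m (i, True)) (gvec P i (pe P i)) i"
| r_a: "1 \<le> i \<Longrightarrow> i < j \<Longrightarrow> j \<le> pn P \<Longrightarrow>
     rule_app P [(j, True), (i, True)] ((i, True) # gvec P i (pa P i j)) i"
| r_b: "1 \<le> i \<Longrightarrow> i < j \<Longrightarrow> j \<le> pn P \<Longrightarrow> pr P i = \<infinity> \<Longrightarrow>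
     rule_app P [(j, True), (i, False)] ((i, False) # gvec P i (pb P i j)) i"
| r_c: "1 \<le> i \<Longrightarrow> i < j \<Longrightarrow> j \<le> pn P \<Longrightarrow> pr P j = \<infinity> \<Longrightarrow>
     rule_app P [(j, False), (i, True)] ((i, True) # gvec P i (pc P i j)) i"
| r_d: "1 \<le> i \<Longrightarrow> i < j \<Longrightarrow> j \<le> pn P \<Longrightarrow> pr P i = \<infinity> \<Longrightarrow> pr P j = \<infinity> \<Longrightarrow>
     rule_app P [(j, False), (i, False)] ((i, False) # gvec P i (pd P i j)) i"
| r_f: "i \<in> {1..pn P} \<Longrightarrow> pr P i = enat m \<Longrightarrow>
     rule_app P [(i, False)] (replicate (m - 1) (i, True) @ gvec P i (pf P i)) i"
| r_del1: "i \<in> {1..pn P} \<Longrightarrow> rule_app P [(i, True), (i, False)] [] i"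
| r_del2: "i \<in> {1..pn P} \<Longrightarrow> rule_app P [(i, False), (i, True)] [] i"

definition coll_step :: "pcp \<Rightarrow> word \<Rightarrow> word \<Rightarrow> bool" where
  "coll_step P w w' =
    (\<exists>x l y rhs i. w = x @ l @ y \<and> rule_app P l rhs i \<and> w' = x @ rhs @ y \<and>
       (\<forall>x' l' y' rhs' i'. w = x' @ l' @ y' \<and> rule_app P l' rhs' i' \<longrightarrow>
          i < i' \<or> (i = i' \<and> length x \<le> length x')))"

definition collects :: "pcp \<Rightarrow> word \<Rightarrow> word \<Rightarrow> bool" where
  "collects P w v = ((coll_step P)\<^sup>*\<^sup>* w v \<and> nf_word P 0 v)"

definition same_coll :: "pcp \<Rightarrow> word \<Rightarrow> word \<Rightarrow> bool" where
  "same_coll P u w = (\<exists>v. collects P u v \<and> collects P w v)"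

end

theory Submission imports Defs begin

lemma cls_eq_iff: "cls P u = cls P v \<longleftrightarrow> peq P 2 u v"
proof
  assume "cls P u = cls P v"
  moreover have "v \<in> cls P v" by (simp add: cls_def peq.refl)
  ultimately have "v \<in> cls P u" by simp
  then show "peq P 2 u v" by (simp add: cls_def)
next
  assume h: "peq P 2 u v"
  show "cls P u = cls P v" unfolding cls_def using h by (blast intro: peq.trans peq.sym)
qed

lemma cls_mult: "cls P u \<otimes>\<^bsub>H2 P\<^esub> cls P v = cls P (u @ v)"
proof -
  have key: "peq P 2 (u@v) w" if "peq P 2 u u'" "peq P 2 v v'" "peq P 2 (u'@v') w" for u' v' w
  proof -
    have "peq P 2 (u@v) (u'@v)" using peq.ctxt[OF that(1), of "[]" v] by simp
    moreover have "peq P 2 (u'@v) (u'@v')" using peq.ctxt[OF that(2), of u' "[]"] by simp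
    ultimately have "peq P 2 (u@v) (u'@v')" by (rule peq.trans)
    then show ?thesis using that(3) by (rule peq.trans)
  qed
  show ?thesis unfolding H2_def cls_def
    by (auto intro: peq.refl key)
qed

lemma inv_word_simps[simp]: "inv_word [] = []" "inv_word (l # w) = inv_word w @ [(fst l, \<not> snd l)]"
  "inv_word (u @ v) = inv_word v @ inv_word u"
  by (auto simp: inv_word_def split: prod.splits)

lemma words_over_Cons[simp]: "(l # w) \<in> words_over P m \<longleftrightarrow> fst l \<in> {m..pn P} \<and> w \<in> words_over P m"
  by (auto simp: words_over_def)
lemma words_over_Nil[simp]: "[] \<in> words_over P m"
  by (auto simp: words_over_def)
lemma words_over_append[simp]: "(u @ w) \<in> words_over P m \<longleftrightarrow> u \<in> words_over P m \<and> w \<in> words_over P m"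
  by (auto simp: words_over_def)
lemma words_over_inv[simp]: "inv_word w \<in> words_over P m \<longleftrightarrow> w \<in> words_over P m"
  by (induction w) auto

lemma peq_inv_left: "w \<in> words_over P 2 \<Longrightarrow> peq P 2 (inv_word w @ w) []"
proof (induction w)
  case Nil then show ?case by (simp add: peq.refl)
next
  case (Cons l w)
  obtain i s where l: "l = (i, s)" by (cases l)
  have i: "i \<in> {2..pn P}" using Cons.prems l by simp
  have c: "peq P 2 [(i, \<not> s), (i, s)] []"
    using peq.cancel1[OF i] peq.cancel2[OF i] by (cases s) auto
  have "peq P 2 (inv_word w @ [(i, \<not> s), (i, s)] @ w) (inv_word w @ [] @ w)"
    by (rule peq.ctxt[OF c])
  then have "peq P 2 (inv_word (l # w) @ l # w) (inv_word w @ w)" using l by simp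
  then show ?case using Cons by (auto intro: peq.trans)
qed

lemma H2_carrier: "carrier (H2 P) = cls P ` words_over P 2" by (simp add: H2_def)
lemma H2_one: "\<one>\<^bsub>H2 P\<^esub> = cls P []" by (simp add: H2_def)

lemma group_H2: "group (H2 P)"
proof (rule groupI)
  fix x y assume "x \<in> carrier (H2 P)" "y \<in> carrier (H2 P)"
  then show "x \<otimes>\<^bsub>H2 P\<^esub> y \<in> carrier (H2 P)"
    by (auto simp: H2_carrier cls_mult)
next
  show "\<one>\<^bsub>H2 P\<^esub> \<in> carrier (H2 P)" by (auto simp: H2_carrier H2_one)
next
  fix x y z assume "x \<in> carrier (H2 P)" "y \<in> carrier (H2 P)" "z \<in> carrier (H2 P)"
  then show "x \<otimes>\<^bsub>H2 P\<^esub> y \<otimes>\<^bsub>H2 P\<^esub> z = x \<otimes>\<^bsub>H2 P\<^esub> (y \<otimes>\<^bsub>H2 P\<^esub> z)"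
    by (auto simp: H2_carrier cls_mult)
next
  fix x assume "x \<in> carrier (H2 P)"
  then show "\<one>\<^bsub>H2 P\<^esub> \<otimes>\<^bsub>H2 P\<^esub> x = x"
    by (auto simp: H2_carrier cls_mult H2_one)
next
  fix x assume "x \<in> carrier (H2 P)"
  then obtain w where w: "w \<in> words_over P 2" "x = cls P w" by (auto simp: H2_carrier)
  have "cls P (inv_word w) \<otimes>\<^bsub>H2 P\<^esub> x = \<one>\<^bsub>H2 P\<^esub>"
    using w peq_inv_left[OF w(1)] by (simp add: cls_mult H2_one cls_eq_iff)
  moreover have "cls P (inv_word w) \<in> carrier (H2 P)" using w by (simp add: H2_carrier)
  ultimately show "\<exists>y\<in>carrier (H2 P). y \<otimes>\<^bsub>H2 P\<^esub> x = \<one>\<^bsub>H2 P\<^esub>" by blast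
qed


lemma (in group) swap_inv:
  "a \<in> carrier G \<Longrightarrow> b \<in> carrier G \<Longrightarrow> c \<in> carrier G \<Longrightarrow> a \<otimes> b = b \<otimes> c \<Longrightarrow> inv a \<otimes> b = b \<otimes> inv c"
proof -
  assume a: "a \<in> carrier G" and b: "b \<in> carrier G" and c: "c \<in> carrier G" and e: "a \<otimes> b = b \<otimes> c"
  have "inv a \<otimes> b = inv a \<otimes> (b \<otimes> c) \<otimes> inv c" using a b c by (simp add: m_assoc)
  also have "\<dots> = inv a \<otimes> (a \<otimes> b) \<otimes> inv c" using e by simp
  also have "\<dots> = b \<otimes> inv c" using a b c by (simp add: m_assoc[symmetric])
  finally show ?thesis .
qed

lemma (in group) pow_inv_lemma:
  "g \<in> carrier G \<Longrightarrow> 1 \<le> (m::nat) \<Longrightarrow> g [^] (m - 1) \<otimes> inv (g [^] m) = inv g"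
proof -
  assume g: "g \<in> carrier G" and m: "1 \<le> m"
  then obtain k where k: "m = Suc k" by (cases m) auto
  have "g [^] Suc k = g \<otimes> g [^] k" using g by (rule nat_pow_Suc2)
  then have "g [^] (m - 1) \<otimes> inv (g [^] m) = g [^] k \<otimes> (inv (g [^] k) \<otimes> inv g)"
    using g k by (simp add: inv_mult_group del: nat_pow_Suc)
  also have "\<dots> = inv g" using g by (simp add: m_assoc[symmetric])
  finally show ?thesis .
qed

definition cnt1 :: "word \<Rightarrow> nat" where
  "cnt1 w = length (filter (\<lambda>l. l = (1, True)) w)"

lemma cnt1_simps[simp]: "cnt1 [] = 0" "cnt1 (l # w) = (if l = (1,True) then Suc (cnt1 w) else cnt1 w)"
  "cnt1 (u @ w) = cnt1 u + cnt1 w" "cnt1 (replicate k l) = (if l = (1,True) then k else 0)"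
  by (auto simp: cnt1_def)

fun hh :: "pcp \<Rightarrow> (word set \<Rightarrow> word set) \<Rightarrow> word \<Rightarrow> word set" where
  "hh P \<sigma> [] = \<one>\<^bsub>H2 P\<^esub>"
| "hh P \<sigma> (l # w) = (if l = (1, True) then hh P \<sigma> w
      else (\<sigma> ^^ cnt1 w) (cls P [l]) \<otimes>\<^bsub>H2 P\<^esub> hh P \<sigma> w)"

definition good :: "pcp \<Rightarrow> word \<Rightarrow> bool" where
  "good P w = (\<forall>l\<in>set w. 1 \<le> fst l \<and> fst l \<le> pn P \<and> (\<not> snd l \<longrightarrow> pr P (fst l) = \<infinity>))"

lemma good_simps[simp]: "good P []"
  "good P (l # w) \<longleftrightarrow> (1 \<le> fst l \<and> fst l \<le> pn P \<and> (\<not> snd l \<longrightarrow> pr P (fst l) = \<infinity>)) \<and> good P w"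
  "good P (u @ w) \<longleftrightarrow> good P u \<and> good P w"
  by (auto simp: good_def)

lemma gvec_set: "l \<in> set (gvec P i x) \<Longrightarrow> fst l \<in> {Suc i..pn P} \<and> (snd l \<longleftrightarrow> 0 \<le> x (fst l)) \<and> x (fst l) \<noteq> 0"
  by (auto simp: gvec_def)

lemma gvec_words_over: "m \<le> Suc i \<Longrightarrow> gvec P i x \<in> words_over P m"
  using gvec_set unfolding words_over_def by fastforce

lemma exp_ok_neg: "exp_ok r x \<Longrightarrow> x < 0 \<Longrightarrow> r = \<infinity>"
  by (cases r) (auto simp: exp_ok_def)

lemma gvec_good: "(\<forall>k\<in>{Suc i..pn P}. exp_ok (pr P k) (x k)) \<Longrightarrow> good P (gvec P i x)"
  unfolding good_def
proof
  fix l assume a: "\<forall>k\<in>{Suc i..pn P}. exp_ok (pr P k) (x k)" and l: "l \<in> set (gvec P i x)"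
  from gvec_set[OF l] have "fst l \<in> {Suc i..pn P}" "snd l \<longleftrightarrow> 0 \<le> x (fst l)" by auto
  with a show "1 \<le> fst l \<and> fst l \<le> pn P \<and> (\<not> snd l \<longrightarrow> pr P (fst l) = \<infinity>)"
    using exp_ok_neg by force
qed

lemma words_over_cnt1: "w \<in> words_over P 2 \<Longrightarrow> cnt1 w = 0"
  by (induction w) auto

lemma cls_replicate: "cls P (replicate m l) = cls P [l] [^]\<^bsub>H2 P\<^esub> m"
proof (induction m)
  case 0 then show ?case by (simp add: H2_one)
next
  case (Suc m)
  have "cls P (replicate (Suc m) l) = cls P (replicate m l @ [l])" by (simp add: replicate_append_same)
  also have "\<dots> = cls P (replicate m l) \<otimes>\<^bsub>H2 P\<^esub> cls P [l]" by (simp add: cls_mult)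
  finally show ?case using Suc by (simp add: nat_pow_Suc)
qed

lemma cls_carrier: "w \<in> words_over P 2 \<Longrightarrow> cls P w \<in> carrier (H2 P)"
  by (simp add: H2_carrier)

lemma cls_inv: "w \<in> words_over P 2 \<Longrightarrow> cls P (inv_word w) = inv\<^bsub>H2 P\<^esub> (cls P w)"
proof -
  assume w: "w \<in> words_over P 2"
  interpret G: group "H2 P" by (rule group_H2)
  have "cls P (inv_word w) \<otimes>\<^bsub>H2 P\<^esub> cls P w = \<one>\<^bsub>H2 P\<^esub>"
    using peq_inv_left[OF w] by (simp add: cls_mult H2_one cls_eq_iff)
  then show ?thesis using w by (intro G.inv_equality[symmetric]) (auto intro: cls_carrier)
qed

lemma cls_letter_inv: "j \<in> {2..pn P} \<Longrightarrow> cls P [(j, False)] = inv\<^bsub>H2 P\<^esub> (cls P [(j, True)])"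
  using cls_inv[of "[(j,True)]" P] by simp

lemma cls_Cons: "cls P (l # w) = cls P [l] \<otimes>\<^bsub>H2 P\<^esub> cls P w"
  by (simp add: cls_mult)


locale L =
  fixes P :: pcp and r1 :: nat and \<sigma> :: "word set \<Rightarrow> word set"
  assumes n1: "1 \<le> pn P" and wf: "pcp_wf P" and der: "derived_ok P"
    and r1: "pr P 1 = enat r1" and hom: "\<sigma> \<in> hom (H2 P) (H2 P)"
    and gens: "\<forall>j\<in>{2..pn P}. \<sigma> (cls P [(j, True)]) = cls P (gvec P 1 (pa P 1 j))"
begin

interpretation G: group "H2 P" by (rule group_H2)

abbreviation "e \<equiv> gvec P 1 (pe P 1)"
abbreviation "h \<equiv> hh P \<sigma>"

lemma wf0: "i \<in> {1..pn P} \<Longrightarrow> pr P i \<noteq> 0"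
proof -
  assume a: "i \<in> {1..pn P}"
  have "\<forall>i\<in>{1..pn P}. pr P i \<noteq> 0" using wf unfolding pcp_wf_def by (elim conjE)
  then show ?thesis using a by blast
qed

lemma r1_pos: "1 \<le> r1"
proof -
  have "pr P 1 \<noteq> 0" using wf0 n1 by simp
  then have "r1 \<noteq> 0" using r1 by (auto simp: zero_enat_def)
  then show ?thesis by simp
qed

lemma pow_hom: "(\<sigma> ^^ k) \<in> hom (H2 P) (H2 P)"
proof (induction k)
  case 0 then show ?case by (auto simp: hom_def)
next
  case (Suc k)
  have "(\<sigma> ^^ Suc k) x \<in> carrier (H2 P)" if "x \<in> carrier (H2 P)" for x
    using hom_in_carrier[OF hom hom_in_carrier[OF Suc that]] by simp
  moreover have "(\<sigma> ^^ Suc k) (x \<otimes>\<^bsub>H2 P\<^esub> y) = (\<sigma> ^^ Suc k) x \<otimes>\<^bsub>H2 P\<^esub> (\<sigma> ^^ Suc k) y"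
    if "x \<in> carrier (H2 P)" "y \<in> carrier (H2 P)" for x y
    using hom_mult[OF Suc that] hom_mult[OF hom hom_in_carrier[OF Suc that(1)] hom_in_carrier[OF Suc that(2)]]
    by simp
  ultimately show ?case by (auto simp: hom_def)
qed

lemma pow_closed: "x \<in> carrier (H2 P) \<Longrightarrow> (\<sigma> ^^ k) x \<in> carrier (H2 P)"
  by (rule hom_in_carrier[OF pow_hom])

lemma pow_mult: "x \<in> carrier (H2 P) \<Longrightarrow> y \<in> carrier (H2 P) \<Longrightarrow>
   (\<sigma> ^^ k) (x \<otimes>\<^bsub>H2 P\<^esub> y) = (\<sigma> ^^ k) x \<otimes>\<^bsub>H2 P\<^esub> (\<sigma> ^^ k) y"
  by (rule hom_mult[OF pow_hom])

lemma pow_one: "(\<sigma> ^^ k) \<one>\<^bsub>H2 P\<^esub> = \<one>\<^bsub>H2 P\<^esub>"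
  using hom_one[OF pow_hom group_H2 group_H2] .

lemma pow_inv: "x \<in> carrier (H2 P) \<Longrightarrow> (\<sigma> ^^ k) (inv\<^bsub>H2 P\<^esub> x) = inv\<^bsub>H2 P\<^esub> ((\<sigma> ^^ k) x)"
  by (rule group_hom.hom_inv) (auto simp: group_hom_def group_hom_axioms_def group_H2 pow_hom)

lemma good_letter: "good P [l] \<Longrightarrow> l \<noteq> (1, True) \<Longrightarrow> fst l \<in> {2..pn P}"
proof -
  assume g: "good P [l]" and n: "l \<noteq> (1, True)"
  obtain a b where l: "l = (a, b)" by (cases l)
  have "a \<noteq> 1"
  proof
    assume "a = 1"
    then have "\<not> b" using n l by simp
    then have "pr P 1 = \<infinity>" using g l \<open>a = 1\<close> by simp
    then show False using r1 by simp
  qed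
  then show ?thesis using g l by simp
qed

lemma good_carrier: "good P w \<Longrightarrow> h w \<in> carrier (H2 P)"
proof (induction w)
  case Nil then show ?case by simp
next
  case (Cons l w)
  show ?case
  proof (cases "l = (1, True)")
    case True then show ?thesis using Cons by simp
  next
    case False
    then have "fst l \<in> {2..pn P}" using Cons.prems good_letter by simp
    then have "cls P [l] \<in> carrier (H2 P)" by (intro cls_carrier) (simp)
    then show ?thesis using Cons False by (simp add: pow_closed)
  qed
qed

lemma hh_append: "good P u \<Longrightarrow> good P v \<Longrightarrow> h (u @ v) = (\<sigma> ^^ cnt1 v) (h u) \<otimes>\<^bsub>H2 P\<^esub> h v"
proof (induction u)
  case Nil then show ?case by (simp add: pow_one good_carrier)
next
  case (Cons l u)
  show ?case
  proof (cases "l = (1, True)")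
    case True then show ?thesis using Cons by simp
  next
    case False
    then have "fst l \<in> {2..pn P}" using Cons.prems good_letter by simp
    then have c: "cls P [l] \<in> carrier (H2 P)" by (intro cls_carrier) (simp)
    have hu: "h u \<in> carrier (H2 P)" "h v \<in> carrier (H2 P)" using Cons.prems good_carrier by auto
    have "h ((l # u) @ v) = (\<sigma> ^^ (cnt1 v + cnt1 u)) (cls P [l]) \<otimes>\<^bsub>H2 P\<^esub> h (u @ v)"
      using False by (simp add: add.commute)
    also have "\<dots> = (\<sigma> ^^ cnt1 v) ((\<sigma> ^^ cnt1 u) (cls P [l])) \<otimes>\<^bsub>H2 P\<^esub> ((\<sigma> ^^ cnt1 v) (h u) \<otimes>\<^bsub>H2 P\<^esub> h v)"
      using Cons by (simp add: funpow_add)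
    also have "\<dots> = (\<sigma> ^^ cnt1 v) (h (l # u)) \<otimes>\<^bsub>H2 P\<^esub> h v"
      using False c hu by (simp add: pow_mult pow_closed G.m_assoc)
    finally show ?thesis .
  qed
qed

lemma hh_words_over: "w \<in> words_over P 2 \<Longrightarrow> h w = cls P w"
proof (induction w)
  case Nil then show ?case by (simp add: H2_one)
next
  case (Cons l w)
  then have "l \<noteq> (1, True)" by auto
  moreover have "cnt1 w = 0" using Cons.prems by (intro words_over_cnt1[of _ P]) simp
  ultimately show ?case using Cons by (simp add: cls_Cons[of P l w])
qed

lemma hh_rep: "h (replicate k (1, True) @ y) = h y"
  by (induction k) auto

lemma e_words: "e \<in> words_over P 2"
  by (rule gvec_words_over) simp

lemma e_good: "good P e"
  using wf n1 unfolding pcp_wf_def by (intro gvec_good) auto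


lemma good_replicate[simp]: "good P (replicate k l) \<longleftrightarrow> k = 0 \<or> good P [l]"
  by (cases k) (auto simp: good_def)

lemma words_over_replicate[simp]: "replicate k l \<in> words_over P m \<longleftrightarrow> k = 0 \<or> fst l \<in> {m..pn P}"
  by (cases k) (auto simp: words_over_def)

lemma wfa: "1 \<le> i \<Longrightarrow> i < j \<Longrightarrow> j \<le> pn P \<Longrightarrow> \<forall>k\<in>{Suc i..pn P}. exp_ok (pr P k) (pa P i j k) \<and> exp_ok (pr P k) (pb P i j k)"
proof -
  assume a: "1 \<le> i" "i < j" "j \<le> pn P"
  have "\<forall>i j k. 1 \<le> i \<and> i < j \<and> j \<le> pn P \<and> i < k \<and> k \<le> pn P \<longrightarrow>
        exp_ok (pr P k) (pa P i j k) \<and> exp_ok (pr P k) (pb P i j k)"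
    using wf unfolding pcp_wf_def by (elim conjE)
  then show ?thesis using a by simp
qed

lemma wfe: "i \<in> {1..pn P} \<Longrightarrow> \<forall>k\<in>{Suc i..pn P}. exp_ok (pr P k) (pe P i k)"
proof -
  assume a: "i \<in> {1..pn P}"
  have "\<forall>i\<in>{1..pn P}. \<forall>k\<in>{Suc i..pn P}. exp_ok (pr P k) (pe P i k)"
    using wf unfolding pcp_wf_def by (elim conjE)
  then show ?thesis using a by blast
qed

lemma derc: "1 \<le> i \<Longrightarrow> i < j \<Longrightarrow> j \<le> pn P \<Longrightarrow> pr P j = \<infinity> \<Longrightarrow>
   (\<forall>k\<in>{Suc i..pn P}. exp_ok (pr P k) (pc P i j k)) \<and> peq P 2 (gvec P i (pc P i j)) (inv_word (gvec P i (pa P i j)))"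
proof -
  assume a: "1 \<le> i" "i < j" "j \<le> pn P" "pr P j = \<infinity>"
  have "\<forall>i j. 1 \<le> i \<and> i < j \<and> j \<le> pn P \<and> pr P j = \<infinity> \<longrightarrow>
        (\<forall>k\<in>{Suc i..pn P}. exp_ok (pr P k) (pc P i j k)) \<and>
        peq P 2 (gvec P i (pc P i j)) (inv_word (gvec P i (pa P i j)))"
    using der unfolding derived_ok_def by (elim conjE)
  then show ?thesis using a by simp
qed

lemma derd: "1 \<le> i \<Longrightarrow> i < j \<Longrightarrow> j \<le> pn P \<Longrightarrow> pr P i = \<infinity> \<Longrightarrow> pr P j = \<infinity> \<Longrightarrow>
   (\<forall>k\<in>{Suc i..pn P}. exp_ok (pr P k) (pd P i j k)) \<and> peq P 2 (gvec P i (pd P i j)) (inv_word (gvec P i (pb P i j)))"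
proof -
  assume a: "1 \<le> i" "i < j" "j \<le> pn P" "pr P i = \<infinity>" "pr P j = \<infinity>"
  have "\<forall>i j. 1 \<le> i \<and> i < j \<and> j \<le> pn P \<and> pr P i = \<infinity> \<and> pr P j = \<infinity> \<longrightarrow>
        (\<forall>k\<in>{Suc i..pn P}. exp_ok (pr P k) (pd P i j k)) \<and>
        peq P 2 (gvec P i (pd P i j)) (inv_word (gvec P i (pb P i j)))"
    using der unfolding derived_ok_def by (elim conjE)
  then show ?thesis using a by simp
qed

lemma derf: "i \<in> {1..pn P} \<Longrightarrow> pr P i \<noteq> \<infinity> \<Longrightarrow>
   (\<forall>k\<in>{Suc i..pn P}. exp_ok (pr P k) (pf P i k)) \<and> peq P 2 (gvec P i (pf P i)) (inv_word (gvec P i (pe P i)))"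
proof -
  assume a: "i \<in> {1..pn P}" "pr P i \<noteq> \<infinity>"
  have "\<forall>i\<in>{1..pn P}. pr P i \<noteq> \<infinity> \<longrightarrow>
        (\<forall>k\<in>{Suc i..pn P}. exp_ok (pr P k) (pf P i k)) \<and>
        peq P 2 (gvec P i (pf P i)) (inv_word (gvec P i (pe P i)))"
    using der unfolding derived_ok_def by (elim conjE)
  then show ?thesis using a by blast
qed

lemma rule_good: "rule_app P l rhs i \<Longrightarrow> good P rhs"
proof (induction rule: rule_app.cases)
  case (r_pow i m) then show ?case using wfe gvec_good by blast
next
  case (r_a i j) then show ?case using wfa[of i j] gvec_good[of i P "pa P i j"] by simp
next
  case (r_b i j) then show ?case using wfa[of i j] gvec_good[of i P "pb P i j"] by simp
next
  case (r_c i j) then show ?case using derc[of i j] gvec_good[of i P "pc P i j"] by simp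
next
  case (r_d i j) then show ?case using derd[of i j] gvec_good[of i P "pd P i j"] by simp
next
  case (r_f i m) then show ?case using derf[of i] gvec_good[of i P "pf P i"] by simp
qed simp_all

lemma gvec_w2: "1 \<le> k \<Longrightarrow> gvec P k x \<in> words_over P 2"
  by (rule gvec_words_over) simp

lemma gvec_cls_inv: "1 \<le> k \<Longrightarrow> peq P 2 (gvec P k x) (inv_word (gvec P k y)) \<Longrightarrow>
    cls P (gvec P k x) = inv\<^bsub>H2 P\<^esub> cls P (gvec P k y)"
proof -
  assume k: "1 \<le> k" and p: "peq P 2 (gvec P k x) (inv_word (gvec P k y))"
  have "cls P (gvec P k x) = cls P (inv_word (gvec P k y))" using p by (simp only: cls_eq_iff)
  then show ?thesis using cls_inv[OF gvec_w2[OF k]] by simp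
qed

lemma gvec_carrier: "1 \<le> k \<Longrightarrow> cls P (gvec P k x) \<in> carrier (H2 P)"
  by (intro cls_carrier gvec_w2)

lemma rule_words2: "rule_app P l rhs i \<Longrightarrow> 2 \<le> i \<Longrightarrow>
   l \<in> words_over P 2 \<and> rhs \<in> words_over P 2 \<and> cls P l = cls P rhs"
proof (induction rule: rule_app.induct)
  case (r_pow i m)
  then show ?case using peq.power[where P=P and m=2 and i=i and k=m] by (simp add: gvec_w2 cls_eq_iff)
next
  case (r_a i j)
  then show ?case using peq.conj[where P=P and m=2 and i=i and j=j] by (simp add: gvec_w2 cls_eq_iff)
next
  case (r_b i j)
  then show ?case using peq.conj_inv[where P=P and m=2 and i=i and j=j] by (simp add: gvec_w2 cls_eq_iff)
next
  case (r_c i j)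
  have ij: "i \<in> {2..pn P}" "j \<in> {2..pn P}" using r_c by auto
  have A: "cls P [(j, True)] \<otimes>\<^bsub>H2 P\<^esub> cls P [(i, True)] = cls P [(i, True)] \<otimes>\<^bsub>H2 P\<^esub> cls P (gvec P i (pa P i j))"
    using peq.conj[where P=P and m=2 and i=i and j=j] r_c by (simp add: cls_mult cls_eq_iff)
  have "cls P [(j, False), (i, True)] = inv\<^bsub>H2 P\<^esub> cls P [(j, True)] \<otimes>\<^bsub>H2 P\<^esub> cls P [(i, True)]"
    using cls_letter_inv[OF ij(2)] cls_Cons[of P "(j,False)" "[(i,True)]"] by simp
  also have "\<dots> = cls P [(i, True)] \<otimes>\<^bsub>H2 P\<^esub> inv\<^bsub>H2 P\<^esub> cls P (gvec P i (pa P i j))"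
    using ij r_c by (intro G.swap_inv A cls_carrier gvec_carrier) auto
  also have "\<dots> = cls P ((i, True) # gvec P i (pc P i j))"
    using derc[of i j] r_c gvec_cls_inv[of i "pc P i j" "pa P i j"] cls_Cons[of P "(i,True)" "gvec P i (pc P i j)"] by simp
  finally show ?case using r_c by (simp add: gvec_w2)
next
  case (r_d i j)
  have ij: "i \<in> {2..pn P}" "j \<in> {2..pn P}" using r_d by auto
  have A: "cls P [(j, True)] \<otimes>\<^bsub>H2 P\<^esub> cls P [(i, False)] = cls P [(i, False)] \<otimes>\<^bsub>H2 P\<^esub> cls P (gvec P i (pb P i j))"
    using peq.conj_inv[where P=P and m=2 and i=i and j=j] r_d by (simp add: cls_mult cls_eq_iff)
  have "cls P [(j, False), (i, False)] = inv\<^bsub>H2 P\<^esub> cls P [(j, True)] \<otimes>\<^bsub>H2 P\<^esub> cls P [(i, False)]"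
    using cls_letter_inv[OF ij(2)] cls_Cons[of P "(j,False)" "[(i,False)]"] by simp
  also have "\<dots> = cls P [(i, False)] \<otimes>\<^bsub>H2 P\<^esub> inv\<^bsub>H2 P\<^esub> cls P (gvec P i (pb P i j))"
    using ij r_d by (intro G.swap_inv A cls_carrier gvec_carrier) auto
  also have "\<dots> = cls P ((i, False) # gvec P i (pd P i j))"
    using derd[of i j] r_d gvec_cls_inv[of i "pd P i j" "pb P i j"] cls_Cons[of P "(i,False)" "gvec P i (pd P i j)"] by simp
  finally show ?case using r_d by (simp add: gvec_w2)
next
  case (r_f i m)
  have i: "i \<in> {2..pn P}" using r_f by auto
  have "pr P i \<noteq> 0" using wf0[of i] r_f by simp
  then have m: "1 \<le> m" using r_f by (cases m) (auto simp: zero_enat_def)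
  have pw: "cls P (gvec P i (pe P i)) = cls P [(i, True)] [^]\<^bsub>H2 P\<^esub> m"
    using peq.power[where P=P and m=2 and i=i and k=m] r_f by (simp add: cls_eq_iff[symmetric] cls_replicate)
  have "cls P (replicate (m - 1) (i, True) @ gvec P i (pf P i))
     = cls P [(i, True)] [^]\<^bsub>H2 P\<^esub> (m - 1) \<otimes>\<^bsub>H2 P\<^esub> inv\<^bsub>H2 P\<^esub> (cls P [(i, True)] [^]\<^bsub>H2 P\<^esub> m)"
    using derf[of i] r_f gvec_cls_inv[of i "pf P i" "pe P i"] pw
    by (simp add: cls_mult[symmetric] cls_replicate)
  also have "\<dots> = inv\<^bsub>H2 P\<^esub> cls P [(i, True)]"
    using i m by (intro G.pow_inv_lemma cls_carrier) auto
  also have "\<dots> = cls P [(i, False)]" using cls_letter_inv[OF i] by simp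
  finally show ?case using r_f by (simp add: gvec_w2)
next
  case (r_del1 i)
  then show ?case using peq.cancel1[where P=P and m=2 and i=i] by (simp add: cls_eq_iff)
next
  case (r_del2 i)
  then show ?case using peq.cancel2[where P=P and m=2 and i=i] by (simp add: cls_eq_iff)
qed

lemma rule_pos: "rule_app P l rhs i \<Longrightarrow> 1 \<le> i"
  by (induction rule: rule_app.induct) auto

lemma sigma_gen: "j \<in> {2..pn P} \<Longrightarrow> \<sigma> (cls P [(j, True)]) = cls P (gvec P 1 (pa P 1 j))"
  using gens by blast

lemma rule_one: "rule_app P l rhs i \<Longrightarrow> good P l \<Longrightarrow> i = 1 \<Longrightarrow>
   (l = replicate r1 (1, True) \<and> rhs = e) \<or> (cnt1 rhs = cnt1 l \<and> h rhs = h l)"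
proof (induction rule: rule_app.induct)
  case (r_pow i m)
  then show ?case using r1 by simp
next
  case (r_a i j)
  then have j: "j \<in> {2..pn P}" by auto
  have c: "cls P [(j, True)] \<in> carrier (H2 P)" using j by (intro cls_carrier) simp
  have "h [(j, True), (i, True)] = \<sigma> (cls P [(j, True)])"
    using r_a c hom_in_carrier[OF hom c] by simp
  also have "\<dots> = h ((i, True) # gvec P i (pa P i j))"
    using r_a sigma_gen[OF j] by (simp add: hh_words_over gvec_w2)
  finally show ?case using r_a words_over_cnt1[OF gvec_w2[of 1 "pa P 1 j"]] by simp
next
  case (r_b i j)
  then show ?case using r1 by simp
next
  case (r_c i j)
  then have j: "j \<in> {2..pn P}" by auto
  have c: "cls P [(j, True)] \<in> carrier (H2 P)" using j by (intro cls_carrier) simp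
  have ci: "cls P [(j, False)] \<in> carrier (H2 P)" using j by (intro cls_carrier) simp
  have "h [(j, False), (i, True)] = \<sigma> (cls P [(j, False)])"
    using r_c ci hom_in_carrier[OF hom ci] by simp
  also have "\<dots> = inv\<^bsub>H2 P\<^esub> \<sigma> (cls P [(j, True)])"
    using pow_inv[OF c, of 1] cls_letter_inv[OF j] by simp
  also have "\<dots> = cls P (gvec P 1 (pc P 1 j))"
    using sigma_gen[OF j] derc[of 1 j] r_c gvec_cls_inv[of 1 "pc P 1 j" "pa P 1 j"] by simp
  also have "\<dots> = h ((i, True) # gvec P i (pc P i j))"
    using r_c by (simp add: hh_words_over gvec_w2)
  finally show ?case using r_c words_over_cnt1[OF gvec_w2[of 1 "pc P 1 j"]] by simp
next
  case (r_d i j)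
  then show ?case using r1 by simp
next
  case (r_f i m)
  then show ?case using r1 by simp
next
  case (r_del1 i)
  then show ?case using r1 by simp
next
  case (r_del2 i)
  then show ?case using r1 by simp
qed

lemma rule_main: "rule_app P l rhs i \<Longrightarrow> good P l \<Longrightarrow>
   (i = 1 \<and> l = replicate r1 (1, True) \<and> rhs = e) \<or> (cnt1 rhs = cnt1 l \<and> h rhs = h l)"
proof -
  assume ra: "rule_app P l rhs i" and g: "good P l"
  show ?thesis
  proof (cases "2 \<le> i")
    case True
    from rule_words2[OF ra True] have "l \<in> words_over P 2" "rhs \<in> words_over P 2" "cls P l = cls P rhs"
      by auto
    then show ?thesis by (simp add: hh_words_over words_over_cnt1)
  next
    case False
    with rule_pos[OF ra] have "i = 1" by simp
    with rule_one[OF ra g] show ?thesis by blast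
  qed
qed

lemma rep_shift: "x # replicate n x @ y = replicate n x @ x # y"
  by (induction n) auto

lemma cstep:
  assumes cs: "coll_step P w w'" and g: "good P w"
  shows "good P w' \<and> ((cnt1 w' = cnt1 w \<and> h w' = h w) \<or>
           (\<exists>y. w = replicate r1 (1, True) @ y \<and> w' = e @ y \<and> good P y))"
proof -
  obtain x l y rhs i where w: "w = x @ l @ y" and ra: "rule_app P l rhs i" and w': "w' = x @ rhs @ y"
    and mn: "\<forall>x' l' y' rhs' i'. w = x' @ l' @ y' \<and> rule_app P l' rhs' i' \<longrightarrow>
               i < i' \<or> (i = i' \<and> length x \<le> length x')"
    using cs unfolding coll_step_def by blast
  have gx: "good P x" "good P l" "good P y" using g w by auto
  have gr: "good P rhs" using rule_good[OF ra] .
  have gw': "good P w'" using gx gr w' by simp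
  from rule_main[OF ra gx(2)] show ?thesis
  proof
    assume A: "i = 1 \<and> l = replicate r1 (1, True) \<and> rhs = e"
    have "x = []"
    proof (rule ccontr)
      assume "x \<noteq> []"
      then obtain x' a where xa: "x = x' @ [a]" by (cases x rule: rev_cases) auto
      obtain j s where a: "a = (j, s)" by (cases a)
      have ga: "1 \<le> j" "j \<le> pn P" "\<not> s \<longrightarrow> pr P j = \<infinity>" using gx(1) xa a by auto
      have lx: "length x = Suc (length x')" using xa by simp
      obtain l' rhs' where w2: "w = x' @ l' @ (drop (length l' - 1) (replicate r1 (1, True)) @ y)"
          and ra': "rule_app P l' rhs' 1"
      proof (cases "j = 1")
        case True
        then have "s" using ga r1 by auto
        have "w = x' @ replicate r1 (1, True) @ (drop (length (replicate r1 (1, True)) - 1) (replicate r1 (1, True)) @ y)"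
        proof -
          have d: "drop (r1 - 1) (replicate r1 (1::nat, True)) = [(1, True)]"
            using r1_pos by (simp)
          show ?thesis using w A xa a True \<open>s\<close> d by (simp add: rep_shift)
        qed
        moreover have "rule_app P (replicate r1 (1, True)) e 1"
          using r1 n1 by (intro rule_app.r_pow) auto
        ultimately show ?thesis using that by blast
      next
        case False
        then have j2: "2 \<le> j" using ga by simp
        have rr: "replicate r1 (1::nat, True) = (1, True) # replicate (r1 - 1) (1, True)"
          using r1_pos by (cases r1) auto
        show ?thesis
        proof (cases s)
          case True
          have "w = x' @ [(j, True), (1, True)] @ (drop (length [(j, True), (1::nat, True)] - 1) (replicate r1 (1, True)) @ y)"
            using w A xa a True rr by simp
          moreover have "rule_app P [(j, True), (1, True)] ((1, True) # gvec P 1 (pa P 1 j)) 1"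
            using j2 ga by (intro rule_app.r_a) auto
          ultimately show ?thesis using that by blast
        next
          case False
          have "w = x' @ [(j, False), (1, True)] @ (drop (length [(j, False), (1::nat, True)] - 1) (replicate r1 (1, True)) @ y)"
            using w A xa a False rr by simp
          moreover have "rule_app P [(j, False), (1, True)] ((1, True) # gvec P 1 (pc P 1 j)) 1"
            using j2 ga False by (intro rule_app.r_c) auto
          ultimately show ?thesis using that by blast
        qed
      qed
      from mn w2 ra' have "i < 1 \<or> (i = 1 \<and> length x \<le> length x')" by blast
      then show False using A lx by simp
    qed
    then show ?thesis using A w w' gx gw' by auto
  next
    assume B: "cnt1 rhs = cnt1 l \<and> h rhs = h l"
    have "h w' = h w"
      using gx gr B unfolding w w' by (simp add: hh_append)
    moreover have "cnt1 w' = cnt1 w" using B unfolding w w' by simp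
    ultimately show ?thesis using gw' by simp
  qed
qed

lemma L1: "(coll_step P)\<^sup>*\<^sup>* w v \<Longrightarrow> good P w \<Longrightarrow> cnt1 w < r1 \<Longrightarrow>
   cnt1 v = cnt1 w \<and> h v = h w \<and> good P v"
proof (induction rule: rtranclp_induct)
  case base then show ?case by simp
next
  case (step u v)
  then have u: "cnt1 u = cnt1 w" "h u = h w" "good P u" by auto
  from step(2) u(3) have st: "good P v \<and> ((cnt1 v = cnt1 u \<and> h v = h u) \<or>
           (\<exists>y. u = replicate r1 (1, True) @ y \<and> v = e @ y \<and> good P y))" by (rule cstep)
  have "\<not> (\<exists>y. u = replicate r1 (1, True) @ y)"
  proof
    assume "\<exists>y. u = replicate r1 (1, True) @ y"
    then obtain y where "u = replicate r1 (1, True) @ y" by blast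
    then have "r1 \<le> cnt1 u" by simp
    then show False using u step.prems by simp
  qed
  then show ?case using st u by auto
qed

lemma L2: "(coll_step P)\<^sup>*\<^sup>* w v \<Longrightarrow> good P w \<Longrightarrow> cnt1 v < r1 \<Longrightarrow> r1 \<le> cnt1 w \<Longrightarrow>
   \<exists>y. good P y \<and> cnt1 y + r1 = cnt1 w \<and> h y = h w \<and> (coll_step P)\<^sup>*\<^sup>* (e @ y) v"
proof (induction rule: converse_rtranclp_induct)
  case base then show ?case by simp
next
  case (step w w')
  from step(1) step.prems(1) have st: "good P w' \<and> ((cnt1 w' = cnt1 w \<and> h w' = h w) \<or>
           (\<exists>y. w = replicate r1 (1, True) @ y \<and> w' = e @ y \<and> good P y))" by (rule cstep)
  then show ?case
  proof (elim conjE disjE exE)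
    assume "good P w'" "cnt1 w' = cnt1 w" "h w' = h w"
    then show ?thesis using step.IH step.prems by simp
  next
    fix y assume "w = replicate r1 (1, True) @ y" "w' = e @ y" "good P y"
    then show ?thesis using step(2) hh_rep[of r1 y] by auto
  qed
qed

lemma nf_cnt: "nf_word P 0 v \<Longrightarrow> cnt1 v < r1"
proof -
  assume "nf_word P 0 v"
  then obtain x where v: "v = gvec P 0 x" and ok: "\<forall>k\<in>{Suc 0..pn P}. exp_ok (pr P k) (x k)"
    unfolding nf_word_def by blast
  have "exp_ok (pr P 1) (x 1)" using ok n1 by auto
  then have x1: "0 \<le> x 1" "x 1 < int r1" using r1 by (auto simp: exp_ok_def)
  have "[Suc 0..<Suc (pn P)] = 1 # [Suc 1..<Suc (pn P)]" using n1 by (simp add: upt_conv_Cons)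
  then have "v = replicate (nat \<bar>x 1\<bar>) (1, 0 \<le> x 1) @ gvec P 1 x"
    unfolding v gvec_def by simp
  then have "cnt1 v = nat \<bar>x 1\<bar>"
    using x1 words_over_cnt1[OF gvec_w2[of 1 x]] by simp
  then show ?thesis using x1 by simp
qed

lemma collects_cnt: "collects P w v \<Longrightarrow> cnt1 v < r1"
  unfolding collects_def using nf_cnt by blast

lemma h_e_app: "good P y \<Longrightarrow> h (e @ y) = (\<sigma> ^^ cnt1 y) (cls P e) \<otimes>\<^bsub>H2 P\<^esub> h y"
  using hh_append[OF e_good] hh_words_over[OF e_words] by simp

abbreviation "E \<equiv> cls P e"

lemma E_carrier: "E \<in> carrier (H2 P)"
  by (rule cls_carrier[OF e_words])

lemma cnt1_e: "cnt1 e = 0"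
  by (rule words_over_cnt1[OF e_words])

lemma h_e: "h e = E"
  by (rule hh_words_over[OF e_words])

lemma h_rep0: "h (replicate k (1, True)) = \<one>\<^bsub>H2 P\<^esub>"
  using hh_rep[of k "[]"] by simp

lemma gen_eq:
  assumes j: "j \<in> {2..pn P}"
    and sc: "same_coll P ((j, True) # replicate r1 (1, True)) ((j, True) # e)"
  shows "(\<sigma> ^^ r1) (cls P [(j, True)]) = inv\<^bsub>H2 P\<^esub> E \<otimes>\<^bsub>H2 P\<^esub> cls P [(j, True)] \<otimes>\<^bsub>H2 P\<^esub> E"
proof -
  obtain v where c1: "collects P ((j, True) # replicate r1 (1, True)) v"
    and c2: "collects P ((j, True) # e) v"
    using sc unfolding same_coll_def by blast
  have cv: "cnt1 v < r1" using collects_cnt[OF c1] .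
  have gc: "cls P [(j, True)] \<in> carrier (H2 P)" using j by (intro cls_carrier) simp
  define S where "S = (\<sigma> ^^ r1) (cls P [(j, True)])"
  have Sc: "S \<in> carrier (H2 P)" unfolding S_def using pow_closed[OF gc] .
  have g1: "good P ((j, True) # replicate r1 (1, True))" using j n1 by simp
  have "cnt1 ((j, True) # replicate r1 (1, True)) = r1" using j by simp
  moreover have "h ((j, True) # replicate r1 (1, True)) = S"
    using j Sc h_rep0[of r1, simplified] by (simp add: S_def)
  ultimately obtain y where y: "good P y" "cnt1 y = 0" "h y = S" "(coll_step P)\<^sup>*\<^sup>* (e @ y) v"
    using L2[OF _ g1 cv] c1 unfolding collects_def by fastforce
  have "h v = h (e @ y)" using L1[OF y(4)] y e_good r1_pos cnt1_e by (simp)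
  also have "\<dots> = E \<otimes>\<^bsub>H2 P\<^esub> S" using h_e_app[OF y(1)] y h_e by simp
  finally have hv1: "h v = E \<otimes>\<^bsub>H2 P\<^esub> S" .
  have g2: "good P ((j, True) # e)" using j e_good by simp
  have "h v = h ((j, True) # e)"
    using L1[OF _ g2] c2 j cnt1_e r1_pos unfolding collects_def by simp
  also have "\<dots> = cls P [(j, True)] \<otimes>\<^bsub>H2 P\<^esub> E" using j cnt1_e h_e by simp
  finally have eq: "E \<otimes>\<^bsub>H2 P\<^esub> S = cls P [(j, True)] \<otimes>\<^bsub>H2 P\<^esub> E" using hv1 by simp
  have "S = inv\<^bsub>H2 P\<^esub> E \<otimes>\<^bsub>H2 P\<^esub> (E \<otimes>\<^bsub>H2 P\<^esub> S)"
    using Sc E_carrier by (simp add: G.m_assoc[symmetric])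
  also have "\<dots> = inv\<^bsub>H2 P\<^esub> E \<otimes>\<^bsub>H2 P\<^esub> cls P [(j, True)] \<otimes>\<^bsub>H2 P\<^esub> E"
    using eq gc E_carrier by (simp add: G.m_assoc)
  finally show ?thesis unfolding S_def .
qed

lemma conj_hom: "(\<lambda>x. inv\<^bsub>H2 P\<^esub> E \<otimes>\<^bsub>H2 P\<^esub> x \<otimes>\<^bsub>H2 P\<^esub> E) \<in> hom (H2 P) (H2 P)"
proof -
  have r: "E \<otimes>\<^bsub>H2 P\<^esub> (inv\<^bsub>H2 P\<^esub> E \<otimes>\<^bsub>H2 P\<^esub> z) = z" if "z \<in> carrier (H2 P)" for z
    using that E_carrier by (simp add: G.m_assoc[symmetric])
  show ?thesis unfolding hom_def
    using E_carrier r by (auto simp: G.m_assoc)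
qed

lemma hom_agree:
  assumes f: "f \<in> hom (H2 P) (H2 P)" and g: "g \<in> hom (H2 P) (H2 P)"
    and gen: "\<forall>j\<in>{2..pn P}. f (cls P [(j, True)]) = g (cls P [(j, True)])"
  shows "w \<in> words_over P 2 \<Longrightarrow> f (cls P w) = g (cls P w)"
proof (induction w)
  case Nil
  then show ?case using hom_one[OF f group_H2 group_H2] hom_one[OF g group_H2 group_H2]
    by (simp add: H2_one)
next
  case (Cons l w)
  obtain j s where l: "l = (j, s)" by (cases l)
  have j: "j \<in> {2..pn P}" using Cons.prems l by simp
  have w: "w \<in> words_over P 2" using Cons.prems by simp
  have c: "cls P [(j, True)] \<in> carrier (H2 P)" using j by (intro cls_carrier) simp
  have cl: "cls P [l] \<in> carrier (H2 P)" using j l by (intro cls_carrier) simp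
  have cw: "cls P w \<in> carrier (H2 P)" using w by (rule cls_carrier)
  have fg: "group_hom (H2 P) (H2 P) f" "group_hom (H2 P) (H2 P) g"
    using f g by (auto simp: group_hom_def group_hom_axioms_def group_H2)
  have "f (cls P [l]) = g (cls P [l])"
  proof (cases s)
    case True then show ?thesis using gen j l by simp
  next
    case False
    then show ?thesis using l cls_letter_inv[OF j] group_hom.hom_inv[OF fg(1) c]
      group_hom.hom_inv[OF fg(2) c] gen j by simp
  qed
  then show ?case using Cons.IH[OF w] cls_Cons[of P l w] hom_mult[OF f cl cw] hom_mult[OF g cl cw]
    by simp
qed

lemma partA:
  assumes sc: "\<forall>j\<in>{2..pn P}. same_coll P ((j, True) # replicate r1 (1, True)) ((j, True) # e)"
  shows "(\<forall>x\<in>carrier (H2 P). (\<sigma> ^^ r1) x = inv\<^bsub>H2 P\<^esub> E \<otimes>\<^bsub>H2 P\<^esub> x \<otimes>\<^bsub>H2 P\<^esub> E)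
     \<and> \<sigma> \<in> iso (H2 P) (H2 P)"
proof -
  have all: "(\<sigma> ^^ r1) x = inv\<^bsub>H2 P\<^esub> E \<otimes>\<^bsub>H2 P\<^esub> x \<otimes>\<^bsub>H2 P\<^esub> E" if x: "x \<in> carrier (H2 P)" for x
  proof -
    obtain w where w: "w \<in> words_over P 2" "x = cls P w" using x by (auto simp: H2_carrier)
    have "(\<sigma> ^^ r1) (cls P w) = (\<lambda>x. inv\<^bsub>H2 P\<^esub> E \<otimes>\<^bsub>H2 P\<^esub> x \<otimes>\<^bsub>H2 P\<^esub> E) (cls P w)"
      by (rule hom_agree[OF pow_hom conj_hom _ w(1)]) (use sc gen_eq in auto)
    then show ?thesis using w by simp
  qed
  obtain k where k: "r1 = Suc k" using r1_pos by (cases r1) auto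
  have inj: "inj_on \<sigma> (carrier (H2 P))"
  proof (rule inj_onI)
    fix x y assume x: "x \<in> carrier (H2 P)" and y: "y \<in> carrier (H2 P)" and xy: "\<sigma> x = \<sigma> y"
    have "(\<sigma> ^^ r1) x = (\<sigma> ^^ r1) y" unfolding k funpow_Suc_right using xy by simp
    then have "inv\<^bsub>H2 P\<^esub> E \<otimes>\<^bsub>H2 P\<^esub> x \<otimes>\<^bsub>H2 P\<^esub> E = inv\<^bsub>H2 P\<^esub> E \<otimes>\<^bsub>H2 P\<^esub> y \<otimes>\<^bsub>H2 P\<^esub> E"
      using all x y by simp
    then show "x = y" using x y E_carrier by simp
  qed
  have surj: "\<sigma> ` carrier (H2 P) = carrier (H2 P)"
  proof
    show "\<sigma> ` carrier (H2 P) \<subseteq> carrier (H2 P)" using hom_in_carrier[OF hom] by blast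
  next
    show "carrier (H2 P) \<subseteq> \<sigma> ` carrier (H2 P)"
    proof
      fix y assume y: "y \<in> carrier (H2 P)"
      define z where "z = E \<otimes>\<^bsub>H2 P\<^esub> y \<otimes>\<^bsub>H2 P\<^esub> inv\<^bsub>H2 P\<^esub> E"
      have zc: "z \<in> carrier (H2 P)" unfolding z_def using y E_carrier by simp
      have r2: "inv\<^bsub>H2 P\<^esub> E \<otimes>\<^bsub>H2 P\<^esub> (E \<otimes>\<^bsub>H2 P\<^esub> y) = y"
        using y E_carrier by (simp add: G.m_assoc[symmetric])
      have "(\<sigma> ^^ r1) z = y" using all[OF zc] y E_carrier unfolding z_def
        by (simp add: G.m_assoc r2[simplified])
      then have "y = \<sigma> ((\<sigma> ^^ k) z)" unfolding k by simp
      moreover have "(\<sigma> ^^ k) z \<in> carrier (H2 P)" using pow_closed[OF zc] .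
      ultimately show "y \<in> \<sigma> ` carrier (H2 P)" by blast
    qed
  qed
  show ?thesis using all inj surj hom unfolding iso_def bij_betw_def by blast
qed

lemma partB:
  assumes sc: "same_coll P (replicate (Suc r1) (1, True)) ((1, True) # e)"
  shows "\<sigma> E = E"
proof -
  obtain v where c1: "collects P (replicate (Suc r1) (1, True)) v"
    and c2: "collects P ((1, True) # e) v"
    using sc unfolding same_coll_def by blast
  have cv: "cnt1 v < r1" using collects_cnt[OF c1] .
  have p1: "(coll_step P)\<^sup>*\<^sup>* (replicate (Suc r1) (1, True)) v"
    and p2: "(coll_step P)\<^sup>*\<^sup>* ((1, True) # e) v" using c1 c2 unfolding collects_def by auto
  have gA: "good P (replicate (Suc r1) (1, True))" using n1 by simp
  have gB: "good P ((1, True) # e)" using n1 e_good by simp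
  have sE: "\<sigma> E \<in> carrier (H2 P)" using hom_in_carrier[OF hom E_carrier] .
  obtain y1 where y1: "good P y1" "cnt1 y1 = 1" "h y1 = \<one>\<^bsub>H2 P\<^esub>" "(coll_step P)\<^sup>*\<^sup>* (e @ y1) v"
    using L2[OF p1 gA cv] h_rep0[of "Suc r1"] by auto
  have he1: "h (e @ y1) = \<sigma> E" using h_e_app[OF y1(1)] y1 h_e sE by simp
  have ge1: "good P (e @ y1)" using e_good y1 by simp
  have ce1: "cnt1 (e @ y1) = 1" using cnt1_e y1 by simp
  show ?thesis
  proof (cases "r1 = 1")
    case False
    then have r2: "1 < r1" using r1_pos by simp
    have "h v = h ((1, True) # e)" using L1[OF p2 gB] cnt1_e r2 by simp
    then have hv: "h v = E" using h_e by simp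
    have "h v = \<sigma> E" using L1[OF y1(4) ge1] ce1 r2 he1 by simp
    then show ?thesis using hv by simp
  next
    case True
    obtain y2 where y2: "good P y2" "cnt1 y2 = 0" "h y2 = E" "(coll_step P)\<^sup>*\<^sup>* (e @ y2) v"
      using L2[OF p2 gB cv] True cnt1_e h_e by auto
    have "h v = h (e @ y2)" using L1[OF y2(4)] y2 e_good cnt1_e True by simp
    also have "\<dots> = E \<otimes>\<^bsub>H2 P\<^esub> E" using h_e_app[OF y2(1)] y2 by simp
    finally have hvB: "h v = E \<otimes>\<^bsub>H2 P\<^esub> E" .
    obtain y3 where y3: "good P y3" "cnt1 y3 = 0" "h y3 = \<sigma> E" "(coll_step P)\<^sup>*\<^sup>* (e @ y3) v"
      using L2[OF y1(4) ge1 cv] True ce1 he1 by auto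
    have "h v = h (e @ y3)" using L1[OF y3(4)] y3 e_good cnt1_e True by simp
    also have "\<dots> = E \<otimes>\<^bsub>H2 P\<^esub> \<sigma> E" using h_e_app[OF y3(1)] y3 by simp
    finally have "E \<otimes>\<^bsub>H2 P\<^esub> \<sigma> E = E \<otimes>\<^bsub>H2 P\<^esub> E" using hvB by simp
    then show ?thesis using E_carrier sE by simp
  qed
qed

end

theorem lemma11:
  fixes P :: pcp and r1 :: nat and \<sigma> :: "word set \<Rightarrow> word set"
  assumes n1: "1 \<le> pn P"
    and wf: "pcp_wf P"
    and der: "derived_ok P"
    and r1: "pr P 1 = enat r1"
    and cons: "consistent2 P"
    and hom: "\<sigma> \<in> hom (H2 P) (H2 P)"
    and gens: "\<forall>j\<in>{2..pn P}. \<sigma> (cls P [(j, True)]) = cls P (gvec P 1 (pa P 1 j))"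
  shows
    "((\<forall>j\<in>{2..pn P}. same_coll P ((j, True) # replicate r1 (1, True))
                                 ((j, True) # gvec P 1 (pe P 1))) \<longrightarrow>
        (\<forall>x\<in>carrier (H2 P). (\<sigma> ^^ r1) x =
            inv\<^bsub>H2 P\<^esub> (cls P (gvec P 1 (pe P 1))) \<otimes>\<^bsub>H2 P\<^esub> x \<otimes>\<^bsub>H2 P\<^esub> cls P (gvec P 1 (pe P 1)))
        \<and> \<sigma> \<in> iso (H2 P) (H2 P))
   \<and> ((\<forall>j\<in>{2..pn P}. same_coll P ((j, True) # replicate r1 (1, True))
                                 ((j, True) # gvec P 1 (pe P 1)))
       \<and> same_coll P (replicate (Suc r1) (1, True)) ((1, True) # gvec P 1 (pe P 1)) \<longrightarrow>
        \<sigma> (cls P (gvec P 1 (pe P 1))) = cls P (gvec P 1 (pe P 1)))"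
proof -
  interpret L P r1 \<sigma> using n1 wf der r1 hom gens by unfold_locales
  show ?thesis using partA partB by blast
qed

end
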